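(* Let $\mathcal X$ be an MRN with transition cocycle $P_{\mathcal X}$. The following are equivalent: (i) $\mathcal X$ converges in distribution; (ii) there exists an invariant distribution $p$ of $\mathcal X$ such that for every $q\in\Sigma_1^+$ and $\mu$-a.e. $\omega$, $\lim_{n\to\infty}|P_{\mathcal X}(n,\theta^{-n}\omega)q-p(\omega)|=0$; (iii) there exists an invariant distribution $p$ of $\mathcal X$ such that for every $q\in\Sigma_1^+$ and $\mu$-a.e. $\omega$, $\lim_{n\to\infty}|P_{\mathcal X}(n,\omega)q-p(\theta^n\omega)|=0$. Moreover, the invariant distributions in (ii) and (iii) are uniquely determined $\mu$-a.e. and coincide $\mu$-a.e.
   Context: Let $k\ge2$, $S=\{s_1,\dots,s_k\}$, $\mathbb K=\{1,\dots,k\}$; $|\cdot|$ is the $\ell^1$-norm on $\mathbb R^k$; $\Sigma_1^+=\{v\in\mathbb R^k:v_j\ge0,\sum_jv_j=1\}$. $\Theta=(\Omega,\mathcal F,\mu,\theta)$ is an invertible metric dynamical system (standard probability space, $\theta$ invertible, ergodic, $\mu$-preserving). A Markov random network (MRN) over $\Theta$ is a process $\mathcal X=(X_n)_{n\in\mathbb N_0}$ on $S\times\Omega$ such that $\omega\mapsto\mathbb P\{X_n=(s_i,\theta^n\omega)\mid X_0=(s_j,\omega)\}$ is measurable, transition probabilities between fibres sum to one, and the Markov property holds along fibres; its transition cocycle $P_{\mathcal X}(n,\omega)=(\mathbb P\{X_n=(s_i,\theta^n\omega)\mid X_0=(s_j,\omega)\})_{i,j}$ is, for $\mu$-a.e.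 $\omega$, column-stochastic with $P_{\mathcal X}(0,\omega)=I_k$ and $P_{\mathcal X}(m+n,\omega)=P_{\mathcal X}(m,\theta^n\omega)P_{\mathcal X}(n,\omega)$. An invariant distribution of $\mathcal X$ is an $\mathcal F$-measurable $p:\Omega\to\Sigma_1^+$ with $P_{\mathcal X}(n,\omega)p(\omega)=p(\theta^n\omega)$ for all $n\in\mathbb N_0$, $\mu$-a.e. $\omega$. $\mathcal X$ converges in distribution if for $\mu$-a.e. $\omega$, $\lim_{n\to\infty}|P_{\mathcal X}(n,\omega)u-P_{\mathcal X}(n,\omega)v|=0$ for all $u,v\in\Sigma_1^+$. *)

theory Defs
  imports "HOL-Probability.Probability"
begin

definition l1norm :: "real ^ 'k \<Rightarrow> real" where
  "l1norm v = (\<Sum>j\<in>UNIV. \<bar>v $ j\<bar>)"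

definition simplex1 :: "(real ^ 'k) set" where
  "simplex1 = {v. (\<forall>j. 0 \<le> v $ j) \<and> (\<Sum>j\<in>UNIV. v $ j) = 1}"

text \<open>Column-stochastic matrices (entry A \$ i \$ j is row i, column j).\<close>
definition column_stochastic :: "real ^ 'k ^ 'k \<Rightarrow> bool" where
  "column_stochastic A \<longleftrightarrow> (\<forall>i j. 0 \<le> A $ i $ j) \<and> (\<forall>j. (\<Sum>i\<in>UNIV. A $ i $ j) = 1)"

definition ergodic_map :: "'a measure \<Rightarrow> ('a \<Rightarrow> 'a) \<Rightarrow> bool" where
  "ergodic_map M \<theta> \<longleftrightarrow>
     (\<forall>A\<in>sets M. \<theta> -` A \<inter> space M = A \<longrightarrow> measure M A = 0 \<or> measure M A = 1)"

definition invertible_mds :: "'a measure \<Rightarrow> ('a \<Rightarrow> 'a) \<Rightarrow> bool" where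
  "invertible_mds M \<theta> \<longleftrightarrow>
     prob_space M \<and>
     \<theta> \<in> M \<rightarrow>\<^sub>M M \<and>
     bij_betw \<theta> (space M) (space M) \<and>
     inv_into (space M) \<theta> \<in> M \<rightarrow>\<^sub>M M \<and>
     distr M M \<theta> = M \<and>
     ergodic_map M \<theta>"

definition transition_cocycle ::
    "'a measure \<Rightarrow> ('a \<Rightarrow> 'a) \<Rightarrow> (nat \<Rightarrow> 'a \<Rightarrow> real ^ 'k ^ 'k) \<Rightarrow> bool" where
  "transition_cocycle M \<theta> P \<longleftrightarrow>
     (\<forall>n i j. (\<lambda>\<omega>. P n \<omega> $ i $ j) \<in> borel_measurable M) \<and>
     (AE \<omega> in M.
        (\<forall>n. column_stochastic (P n \<omega>)) \<and>
        P 0 \<omega> = mat 1 \<and>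
        (\<forall>m n. P (m + n) \<omega> = P m ((\<theta> ^^ n) \<omega>) ** P n \<omega>))"

definition invariant_distribution ::
    "'a measure \<Rightarrow> ('a \<Rightarrow> 'a) \<Rightarrow> (nat \<Rightarrow> 'a \<Rightarrow> real ^ 'k ^ 'k) \<Rightarrow> ('a \<Rightarrow> real ^ 'k) \<Rightarrow> bool" where
  "invariant_distribution M \<theta> P p \<longleftrightarrow>
     p \<in> borel_measurable M \<and>
     (\<forall>\<omega>\<in>space M. p \<omega> \<in> simplex1) \<and>
     (\<forall>n. AE \<omega> in M. P n \<omega> *v p \<omega> = p ((\<theta> ^^ n) \<omega>))"

definition converges_in_distribution ::
    "'a measure \<Rightarrow> (nat \<Rightarrow> 'a \<Rightarrow> real ^ 'k ^ 'k) \<Rightarrow> bool" where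
  "converges_in_distribution M P \<longleftrightarrow>
     (AE \<omega> in M. \<forall>u\<in>simplex1. \<forall>v\<in>simplex1.
        (\<lambda>n. l1norm (P n \<omega> *v u - P n \<omega> *v v)) \<longlonglongrightarrow> 0)"

definition pullback_attracting ::
    "'a measure \<Rightarrow> ('a \<Rightarrow> 'a) \<Rightarrow> (nat \<Rightarrow> 'a \<Rightarrow> real ^ 'k ^ 'k) \<Rightarrow> ('a \<Rightarrow> real ^ 'k) \<Rightarrow> bool" where
  "pullback_attracting M \<theta> P p \<longleftrightarrow>
     (\<forall>q\<in>simplex1. AE \<omega> in M.
        (\<lambda>n. l1norm (P n ((inv_into (space M) \<theta> ^^ n) \<omega>) *v q - p \<omega>)) \<longlonglongrightarrow> 0)"

definition forward_attracting ::
    "'a measure \<Rightarrow> ('a \<Rightarrow> 'a) \<Rightarrow> (nat \<Rightarrow> 'a \<Rightarrow> real ^ 'k ^ 'k) \<Rightarrow> ('a \<Rightarrow> real ^ 'k) \<Rightarrow> bool" where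
  "forward_attracting M \<theta> P p \<longleftrightarrow>
     (\<forall>q\<in>simplex1. AE \<omega> in M.
        (\<lambda>n. l1norm (P n \<omega> *v q - p ((\<theta> ^^ n) \<omega>))) \<longlonglongrightarrow> 0)"

end

theory Submission
  imports Defs
begin


definition dm :: "real^'k^'k \<Rightarrow> real" where
  "dm A = Max ((\<lambda>(i,j). \<Sum>r\<in>UNIV. \<bar>A$r$i - A$r$j\<bar>) ` UNIV)"

lemma dm_ge: "(\<Sum>r\<in>UNIV. \<bar>A$r$i - A$r$j\<bar>) \<le> dm A"
  unfolding dm_def by (rule Max_ge) (auto intro: image_eqI[where x="(i,j)"])

lemma dm_le: assumes "\<And>i j. (\<Sum>r\<in>UNIV. \<bar>A$r$i - A$r$j\<bar>) \<le> c" shows "dm A \<le> c"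
  unfolding dm_def using assms by (subst Max_le_iff) auto

lemma dm_nonneg: "0 \<le> dm A"
  using dm_ge[of A i i] by simp

lemma l1_mv: "l1norm (A *v u - A *v v) = (\<Sum>r\<in>UNIV. \<bar>\<Sum>l\<in>UNIV. A$r$l * (u$l - v$l)\<bar>)"
  by (simp add: l1norm_def matrix_vector_mult_def sum_subtractf right_diff_distrib)

lemma bound:
  assumes u: "u \<in> simplex1" and v: "v \<in> simplex1"
  shows "l1norm (A *v u - A *v v) \<le> dm A"
proof -
  have u0: "\<And>i. 0 \<le> u$i" and u1: "(\<Sum>i\<in>UNIV. u$i) = 1" using u by (auto simp: simplex1_def)
  have v0: "\<And>i. 0 \<le> v$i" and v1: "(\<Sum>i\<in>UNIV. v$i) = 1" using v by (auto simp: simplex1_def)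
  have key: "(\<Sum>l\<in>UNIV. A$r$l * (u$l - v$l)) = (\<Sum>i\<in>UNIV. \<Sum>j\<in>UNIV. u$i * v$j * (A$r$i - A$r$j))" for r
  proof -
    have "(\<Sum>i\<in>UNIV. \<Sum>j\<in>UNIV. u$i * v$j * (A$r$i - A$r$j))
       = (\<Sum>i\<in>UNIV. \<Sum>j\<in>UNIV. u$i * v$j * A$r$i) - (\<Sum>i\<in>UNIV. \<Sum>j\<in>UNIV. u$i * v$j * A$r$j)"
      by (simp add: right_diff_distrib sum_subtractf)
    also have "(\<Sum>i\<in>UNIV. \<Sum>j\<in>UNIV. u$i * v$j * A$r$i) = (\<Sum>i\<in>UNIV. u$i * A$r$i * (\<Sum>j\<in>UNIV. v$j))"
    proof (rule sum.cong[OF refl])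
      fix i show "(\<Sum>j\<in>UNIV. u$i * v$j * A$r$i) = u$i * A$r$i * (\<Sum>j\<in>UNIV. v$j)"
        by (simp only: sum_distrib_left sum_distrib_right) (simp add: mult_ac)
    qed
    also have "(\<Sum>i\<in>UNIV. \<Sum>j\<in>UNIV. u$i * v$j * A$r$j) = (\<Sum>j\<in>UNIV. v$j * A$r$j * (\<Sum>i\<in>UNIV. u$i))"
      by (subst sum.swap) (simp add: sum_distrib_left sum_distrib_right mult_ac)
    finally show ?thesis using u1 v1 by (simp add: right_diff_distrib sum_subtractf mult_ac)
  qed
  have "l1norm (A *v u - A *v v) = (\<Sum>r\<in>UNIV. \<bar>\<Sum>i\<in>UNIV. \<Sum>j\<in>UNIV. u$i * v$j * (A$r$i - A$r$j)\<bar>)"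
    by (simp add: l1_mv key)
  also have "\<dots> \<le> (\<Sum>r\<in>UNIV. \<Sum>i\<in>UNIV. \<Sum>j\<in>UNIV. u$i * v$j * \<bar>A$r$i - A$r$j\<bar>)"
  proof (rule sum_mono)
    fix r
    have "\<bar>\<Sum>i\<in>UNIV. \<Sum>j\<in>UNIV. u$i * v$j * (A$r$i - A$r$j)\<bar> \<le> (\<Sum>i\<in>UNIV. \<bar>\<Sum>j\<in>UNIV. u$i * v$j * (A$r$i - A$r$j)\<bar>)"
      by (rule sum_abs)
    also have "\<dots> \<le> (\<Sum>i\<in>UNIV. \<Sum>j\<in>UNIV. \<bar>u$i * v$j * (A$r$i - A$r$j)\<bar>)"
      by (rule sum_mono) (rule sum_abs)
    also have "\<dots> = (\<Sum>i\<in>UNIV. \<Sum>j\<in>UNIV. u$i * v$j * \<bar>A$r$i - A$r$j\<bar>)"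
      using u0 v0 by (simp add: abs_mult)
    finally show "\<bar>\<Sum>i\<in>UNIV. \<Sum>j\<in>UNIV. u$i * v$j * (A$r$i - A$r$j)\<bar> \<le> (\<Sum>i\<in>UNIV. \<Sum>j\<in>UNIV. u$i * v$j * \<bar>A$r$i - A$r$j\<bar>)" .
  qed
  also have "\<dots> = (\<Sum>i\<in>UNIV. \<Sum>r\<in>UNIV. \<Sum>j\<in>UNIV. u$i * v$j * \<bar>A$r$i - A$r$j\<bar>)"
    by (rule sum.swap)
  also have "\<dots> = (\<Sum>i\<in>UNIV. \<Sum>j\<in>UNIV. \<Sum>r\<in>UNIV. u$i * v$j * \<bar>A$r$i - A$r$j\<bar>)"
    by (rule sum.cong[OF refl], rule sum.swap)
  also have "\<dots> = (\<Sum>i\<in>UNIV. \<Sum>j\<in>UNIV. u$i * v$j * (\<Sum>r\<in>UNIV. \<bar>A$r$i - A$r$j\<bar>))"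
    by (simp add: sum_distrib_left)
  also have "\<dots> \<le> (\<Sum>i\<in>UNIV. \<Sum>j\<in>UNIV. u$i * v$j * dm A)"
    by (intro sum_mono mult_left_mono dm_ge) (simp add: u0 v0)
  also have "\<dots> = (\<Sum>i\<in>UNIV. u$i * dm A * (\<Sum>j\<in>UNIV. v$j))"
    by (rule sum.cong[OF refl]) (simp only: sum_distrib_left sum_distrib_right; simp add: mult_ac)
  also have "\<dots> = (\<Sum>i\<in>UNIV. u$i) * dm A"
    by (simp add: v1 sum_distrib_right)
  also have "\<dots> = dm A" by (simp add: u1)
  finally show ?thesis .
qed

lemma contr:
  assumes "column_stochastic B" shows "l1norm (B *v w) \<le> l1norm w"
proof -
  have B0: "\<And>i j. 0 \<le> B$i$j" and B1: "\<And>j. (\<Sum>i\<in>UNIV. B$i$j) = 1"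
    using assms by (auto simp: column_stochastic_def)
  have "l1norm (B *v w) = (\<Sum>r\<in>UNIV. \<bar>\<Sum>l\<in>UNIV. B$r$l * w$l\<bar>)"
    by (simp add: l1norm_def matrix_vector_mult_def)
  also have "\<dots> \<le> (\<Sum>r\<in>UNIV. \<Sum>l\<in>UNIV. B$r$l * \<bar>w$l\<bar>)"
    by (rule sum_mono, rule order_trans[OF sum_abs]) (simp add: abs_mult B0)
  also have "\<dots> = (\<Sum>l\<in>UNIV. \<bar>w$l\<bar> * (\<Sum>r\<in>UNIV. B$r$l))"
    by (subst sum.swap) (simp add: sum_distrib_left mult_ac)
  also have "\<dots> = l1norm w" by (simp add: B1 l1norm_def)
  finally show ?thesis .
qed

lemma colsum_simplex: "column_stochastic B \<Longrightarrow> column i B \<in> simplex1"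
  by (simp add: column_stochastic_def simplex1_def column_def)

lemma dm_left:
  assumes "column_stochastic B" shows "dm (B ** A) \<le> dm A"
proof (rule dm_le)
  fix i j
  have "(\<Sum>r\<in>UNIV. \<bar>(B ** A)$r$i - (B ** A)$r$j\<bar>) = l1norm (B *v (column i A - column j A))"
    by (simp add: l1norm_def matrix_matrix_mult_def matrix_vector_mult_def column_def
        right_diff_distrib sum_subtractf)
  also have "\<dots> \<le> l1norm (column i A - column j A)" by (rule contr[OF assms])
  also have "\<dots> \<le> dm A" using dm_ge[of A i j] by (simp add: l1norm_def column_def)
  finally show "(\<Sum>r\<in>UNIV. \<bar>(B ** A)$r$i - (B ** A)$r$j\<bar>) \<le> dm A" .
qed

lemma dm_right:
  assumes "column_stochastic B" shows "dm (A ** B) \<le> dm A"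
proof (rule dm_le)
  fix i j
  have "(\<Sum>r\<in>UNIV. \<bar>(A ** B)$r$i - (A ** B)$r$j\<bar>) = l1norm (A *v column i B - A *v column j B)"
    by (simp add: l1norm_def matrix_matrix_mult_def matrix_vector_mult_def column_def)
  also have "\<dots> \<le> dm A" by (rule bound; rule colsum_simplex[OF assms])
  finally show "(\<Sum>r\<in>UNIV. \<bar>(A ** B)$r$i - (A ** B)$r$j\<bar>) \<le> dm A" .
qed

lemma cs_simplex:
  assumes "column_stochastic A" "u \<in> simplex1" shows "A *v u \<in> simplex1"
proof -
  have A0: "\<And>i j. 0 \<le> A$i$j" and A1: "\<And>j. (\<Sum>i\<in>UNIV. A$i$j) = 1"
    using assms(1) by (auto simp: column_stochastic_def)
  have u0: "\<And>i. 0 \<le> u$i" and u1: "(\<Sum>i\<in>UNIV. u$i) = 1" using assms(2) by (auto simp: simplex1_def)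
  have "(\<Sum>r\<in>UNIV. \<Sum>l\<in>UNIV. A$r$l * u$l) = (\<Sum>l\<in>UNIV. u$l * (\<Sum>r\<in>UNIV. A$r$l))"
    by (subst sum.swap) (simp add: sum_distrib_left mult_ac)
  then show ?thesis using A0 A1 u0 u1
    by (auto simp: simplex1_def matrix_vector_mult_def intro!: sum_nonneg)
qed

lemma axis_simplex: "axis i (1::real) \<in> simplex1"
  by (simp add: simplex1_def axis_def)

lemma closed_simplex: "closed (simplex1 :: (real^'k) set)"
  unfolding simplex1_def
  by (intro closed_Collect_conj closed_Collect_all closed_Collect_le closed_Collect_eq continuous_intros)

lemma l1_tendsto: "(\<lambda>n. l1norm (x n - L)) \<longlonglongrightarrow> 0 \<longleftrightarrow> x \<longlonglongrightarrow> (L::real^'k)"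
proof
  assume h: "(\<lambda>n. l1norm (x n - L)) \<longlonglongrightarrow> 0"
  have le: "norm (x n - L) \<le> l1norm (x n - L)" for n
    using norm_le_l1_cart[of "x n - L"] by (simp add: l1norm_def)
  have "(\<lambda>n. norm (x n - L)) \<longlonglongrightarrow> 0"
    by (rule tendsto_sandwich[OF _ _ tendsto_const h]) (auto simp: le)
  then show "x \<longlonglongrightarrow> L" by (simp add: tendsto_norm_zero_iff LIM_zero_iff)
next
  assume "x \<longlonglongrightarrow> L"
  then have "(\<lambda>n. l1norm (x n - L)) \<longlonglongrightarrow> l1norm (L - L)"
    unfolding l1norm_def by (intro tendsto_intros)
  then show "(\<lambda>n. l1norm (x n - L)) \<longlonglongrightarrow> 0" by (simp add: l1norm_def)
qed

lemma meas_vec: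
  fixes f :: "'a \<Rightarrow> real^'k"
  assumes "\<And>i. (\<lambda>x. f x $ i) \<in> borel_measurable M" shows "f \<in> borel_measurable M"
proof (subst borel_measurable_euclidean_space, intro ballI)
  fix b :: "real^'k" assume "b \<in> Basis"
  then obtain i where b: "b = axis i 1" by (auto simp: Basis_vec_def)
  have "(\<lambda>x. f x \<bullet> b) = (\<lambda>x. f x $ i)" unfolding b by (simp add: cart_eq_inner_axis)
  then show "(\<lambda>x. f x \<bullet> b) \<in> borel_measurable M" using assms by simp
qed



lemma dm_cs: assumes "column_stochastic A" shows "dm A \<le> 2"
proof (rule dm_le)
  fix i j
  have A0: "\<And>i j. 0 \<le> A$i$j" and A1: "\<And>j. (\<Sum>i\<in>UNIV. A$i$j) = 1"
    using assms by (auto simp: column_stochastic_def)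
  have "(\<Sum>r\<in>UNIV. \<bar>A$r$i - A$r$j\<bar>) \<le> (\<Sum>r\<in>UNIV. A$r$i + A$r$j)"
  proof (rule sum_mono)
    fix r show "\<bar>A$r$i - A$r$j\<bar> \<le> A$r$i + A$r$j" using A0[of r i] A0[of r j] by (simp add: abs_le_iff)
  qed
  also have "\<dots> = 2" by (simp add: sum.distrib A1)
  finally show "(\<Sum>r\<in>UNIV. \<bar>A$r$i - A$r$j\<bar>) \<le> 2" .
qed

lemma (in prob_space) int_to_0:
  fixes h :: "nat \<Rightarrow> 'a \<Rightarrow> real"
  assumes hm: "\<And>n. h n \<in> borel_measurable M"
    and hb: "\<And>n. AE x in M. \<bar>h n x\<bar> \<le> B"
    and hl: "AE x in M. (\<lambda>n. h n x) \<longlonglongrightarrow> 0"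
  shows "(\<lambda>n. integral\<^sup>L M (h n)) \<longlonglongrightarrow> 0"
  using integral_dominated_convergence[of "\<lambda>x. 0" M h "\<lambda>x. B"] hm hb hl by simp

lemma (in prob_space) ae_from_int:
  fixes h :: "nat \<Rightarrow> 'a \<Rightarrow> real"
  assumes hm: "\<And>n. h n \<in> borel_measurable M"
    and hb: "\<And>n. AE x in M. \<bar>h n x\<bar> \<le> B"
    and h0: "\<And>n x. 0 \<le> h n x"
    and hmono: "AE x in M. \<forall>n. h (Suc n) x \<le> h n x"
    and hi: "(\<lambda>n. integral\<^sup>L M (h n)) \<longlonglongrightarrow> 0"
  shows "AE x in M. (\<lambda>n. h n x) \<longlonglongrightarrow> 0"
proof -
  have hint: "integrable M (h n)" for n
    by (rule integrable_const_bound[OF _ hm]) (use hb[of n] in simp)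
  have Nm: "AE x in M. \<exists>n. h n x < 1 / Suc m" for m
  proof -
    define N where "N = {x\<in>space M. \<forall>n. 1 / Suc m \<le> h n x}"
    have Ns: "N \<in> sets M" unfolding N_def using hm by measurable
    have le: "measure M N \<le> integral\<^sup>L M (h n) / (1 / Suc m)" for n
    proof -
      have "measure M N \<le> measure M {x\<in>space M. h n x \<ge> 1 / Suc m}"
        by (rule finite_measure_mono) (use hm in \<open>auto simp: N_def\<close>)
      also have "\<dots> \<le> integral\<^sup>L M (h n) / (1 / Suc m)"
        by (rule integral_Markov_inequality_measure[where A="space M"]) (auto simp: hint h0)
      finally show ?thesis .
    qed
    have lim: "(\<lambda>n. integral\<^sup>L M (h n) / (1 / Suc m)) \<longlonglongrightarrow> 0 / (1 / Suc m)"
      by (intro tendsto_intros hi) auto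
    have "measure M N \<le> 0 / (1 / Suc m)"
      by (rule LIMSEQ_le_const[OF lim]) (use le in blast)
    then have "measure M N \<le> 0" by simp
    then have "measure M N = 0" by (simp add: measure_le_0_iff)
    then have "AE x in M. x \<notin> N"
      using Ns by (intro AE_I[where N=N]) (auto simp: emeasure_eq_measure)
    then show ?thesis
      by (rule AE_mp) (auto simp: N_def not_le intro!: AE_I2)
  qed
  have "AE x in M. \<forall>m. \<exists>n. h n x < 1 / Suc m"
    by (subst AE_all_countable) (use Nm in auto)
  with hmono show ?thesis
  proof (eventually_elim)
    case (elim x)
    have dec: "decseq (\<lambda>n. h n x)" using elim(1) by (intro decseq_SucI) auto
    show ?case
    proof (rule LIMSEQ_I)
      fix r :: real assume r: "0 < r"
      obtain m where m: "1 / Suc m < r"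
        using r by (metis nat_approx_posE)
      obtain n0 where n0: "h n0 x < 1 / Suc m" using elim(2) by blast
      have "\<forall>n\<ge>n0. norm (h n x - 0) < r"
      proof (intro allI impI)
        fix n assume "n0 \<le> n"
        then have "h n x \<le> h n0 x" using dec by (simp add: decseq_def)
        then show "norm (h n x - 0) < r" using n0 m h0[of n x] by simp
      qed
      then show "\<exists>no. \<forall>n\<ge>no. norm (h n x - 0) < r" by blast
    qed
  qed
qed



lemma l1_nonneg: "0 \<le> l1norm v" by (simp add: l1norm_def sum_nonneg)
lemma l1_sym: "l1norm (a - b) = l1norm (b - a)" by (simp add: l1norm_def abs_minus_commute)
lemma l1_tri: "l1norm (a - b) \<le> l1norm (a - c) + l1norm (c - b)"
  unfolding l1norm_def sum.distrib[symmetric] by (rule sum_mono) simp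

lemma dm_sum_le: "dm A \<le> (\<Sum>ij\<in>UNIV. l1norm (A *v axis (fst ij) 1 - A *v axis (snd ij) 1))"
proof (rule dm_le)
  fix i j
  have "(\<Sum>r\<in>UNIV. \<bar>A$r$i - A$r$j\<bar>) = l1norm (A *v axis (fst (i,j)) 1 - A *v axis (snd (i,j)) 1)"
    by (simp add: matrix_vector_mult_basis l1norm_def column_def)
  also have "\<dots> \<le> (\<Sum>ij\<in>UNIV. l1norm (A *v axis (fst ij) 1 - A *v axis (snd ij) 1))"
    by (rule member_le_sum) (auto simp: l1_nonneg)
  finally show "(\<Sum>r\<in>UNIV. \<bar>A$r$i - A$r$j\<bar>) \<le> \<dots>" .
qed

lemma dm_tendsto_pt:
  fixes A :: "nat \<Rightarrow> real^'k^'k"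
  assumes "\<And>i. (\<lambda>n. l1norm (A n *v axis i 1 - c n)) \<longlonglongrightarrow> 0"
  shows "(\<lambda>n. dm (A n)) \<longlonglongrightarrow> 0"
proof (rule tendsto_sandwich[OF _ _ tendsto_const])
  show "\<forall>\<^sub>F n in sequentially. 0 \<le> dm (A n)" by (simp add: dm_nonneg)
  have "dm (A n) \<le> (\<Sum>ij\<in>UNIV. l1norm (A n *v axis (fst ij) 1 - c n) + l1norm (A n *v axis (snd ij) 1 - c n))" for n
    by (rule order_trans[OF dm_sum_le], rule sum_mono) (metis l1_tri l1_sym)
  then show "\<forall>\<^sub>F n in sequentially. dm (A n) \<le> (\<Sum>ij\<in>UNIV. l1norm (A n *v axis (fst ij) 1 - c n) + l1norm (A n *v axis (snd ij) 1 - c n))"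
    by simp
  show "(\<lambda>n. \<Sum>ij\<in>UNIV. l1norm (A n *v axis (fst ij) 1 - c n) + l1norm (A n *v axis (snd ij) 1 - c n)) \<longlonglongrightarrow> 0"
    using tendsto_sum[of UNIV "\<lambda>ij n. l1norm (A n *v axis (fst ij) 1 - c n) + l1norm (A n *v axis (snd ij) 1 - c n)" "\<lambda>_. 0"]
    by (simp add: tendsto_add_zero assms)
qed

lemma cid_iff: "converges_in_distribution M P \<longleftrightarrow> (AE \<omega> in M. (\<lambda>n. dm (P n \<omega>)) \<longlonglongrightarrow> 0)"
  unfolding converges_in_distribution_def
proof (intro iffI; erule AE_mp; intro AE_I2 impI)
  fix \<omega> assume h: "\<forall>u\<in>simplex1. \<forall>v\<in>simplex1. (\<lambda>n. l1norm (P n \<omega> *v u - P n \<omega> *v v)) \<longlonglongrightarrow> 0"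
  obtain j :: 'b where True by blast
  show "(\<lambda>n. dm (P n \<omega>)) \<longlonglongrightarrow> 0"
    by (rule dm_tendsto_pt[where c="\<lambda>n. P n \<omega> *v axis j 1"]) (use h axis_simplex in blast)
next
  fix \<omega> assume h: "(\<lambda>n. dm (P n \<omega>)) \<longlonglongrightarrow> 0"
  show "\<forall>u\<in>simplex1. \<forall>v\<in>simplex1. (\<lambda>n. l1norm (P n \<omega> *v u - P n \<omega> *v v)) \<longlonglongrightarrow> 0"
    by (intro ballI tendsto_sandwich[OF _ _ tendsto_const h]) (auto simp: l1_nonneg bound)
qed

locale mrn =
  fixes M :: "'a measure" and \<theta> :: "'a \<Rightarrow> 'a" and P :: "nat \<Rightarrow> 'a \<Rightarrow> real^'k^'k"
  assumes mds: "invertible_mds M \<theta>" and coc: "transition_cocycle M \<theta> P"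
begin

sublocale prob_space M using mds by (simp add: invertible_mds_def)

abbreviation S where "S \<equiv> inv_into (space M) \<theta>"

lemma th_meas: "\<theta> \<in> M \<rightarrow>\<^sub>M M" using mds by (simp add: invertible_mds_def)
lemma S_meas: "S \<in> M \<rightarrow>\<^sub>M M" using mds by (simp add: invertible_mds_def)
lemma th_dist: "distr M M \<theta> = M" using mds by (simp add: invertible_mds_def)
lemma bij: "bij_betw \<theta> (space M) (space M)" using mds by (simp add: invertible_mds_def)

lemma th_space: "x \<in> space M \<Longrightarrow> \<theta> x \<in> space M"
  using bij by (auto simp: bij_betw_def)
lemma S_space: "x \<in> space M \<Longrightarrow> S x \<in> space M"
  using bij by (metis bij_betw_def inv_into_into)
lemma th_S: "x \<in> space M \<Longrightarrow> \<theta> (S x) = x"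
  using bij by (metis bij_betw_def f_inv_into_f)
lemma S_th: "x \<in> space M \<Longrightarrow> S (\<theta> x) = x"
  using bij by (metis bij_betw_def inv_into_f_f)

lemma S_dist: "distr M M S = M"
proof -
  have "distr M M S = distr (distr M M \<theta>) M S" by (simp add: th_dist)
  also have "\<dots> = distr M M (S \<circ> \<theta>)" by (rule distr_distr[OF S_meas th_meas])
  also have "\<dots> = distr M M (\<lambda>x. x)" by (rule distr_cong) (auto simp: S_th)
  finally show ?thesis by simp
qed

lemma funpow_meas: "f \<in> M \<rightarrow>\<^sub>M M \<Longrightarrow> (f ^^ n) \<in> M \<rightarrow>\<^sub>M M"
  by (induction n) (auto intro: measurable_comp)

lemma funpow_dist: assumes "f \<in> M \<rightarrow>\<^sub>M M" "distr M M f = M" shows "distr M M (f ^^ n) = M"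
proof (induction n)
  case (Suc n)
  have "distr M M (f ^^ Suc n) = distr M M (f \<circ> f ^^ n)" by simp
  also have "\<dots> = distr (distr M M (f ^^ n)) M f"
    by (rule distr_distr[symmetric, OF assms(1) funpow_meas[OF assms(1)]])
  also have "\<dots> = M" using Suc assms(2) by simp
  finally show ?case .
qed simp

lemma AE_comp: assumes "f \<in> M \<rightarrow>\<^sub>M M" "distr M M f = M" "AE x in M. Q x" shows "AE x in M. Q (f x)"
proof -
  have "AE x in distr M M f. Q x" using assms(3) by (simp only: assms(2))
  then show ?thesis by (rule AE_distrD[OF assms(1)])
qed

lemma int_comp: assumes "f \<in> M \<rightarrow>\<^sub>M M" "distr M M f = M" "h \<in> borel_measurable M"
  shows "integral\<^sup>L M (\<lambda>x. h (f x)) = integral\<^sup>L M (h :: 'a \<Rightarrow> real)"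
  using integral_distr[OF assms(1,3)] assms(2) by simp

lemma AE_th: "AE x in M. Q x \<Longrightarrow> AE x in M. Q ((\<theta>^^n) x)"
  by (rule AE_comp[OF funpow_meas[OF th_meas] funpow_dist[OF th_meas th_dist]])
lemma AE_S: "AE x in M. Q x \<Longrightarrow> AE x in M. Q ((S^^n) x)"
  by (rule AE_comp[OF funpow_meas[OF S_meas] funpow_dist[OF S_meas S_dist]])

lemma thn_space: "x \<in> space M \<Longrightarrow> (\<theta>^^n) x \<in> space M"
  by (induction n) (auto simp: th_space)
lemma Sn_space: "x \<in> space M \<Longrightarrow> (S^^n) x \<in> space M"
  by (induction n) (auto simp: S_space)

lemma thS: "x \<in> space M \<Longrightarrow> (\<theta>^^b) ((S^^(a+b)) x) = (S^^a) x"
proof (induction b)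
  case (Suc b)
  have e1: "(\<theta>^^Suc b) y = (\<theta>^^b) (\<theta> y)" for y by (simp add: funpow_Suc_right del: funpow.simps)
  have "(\<theta>^^Suc b) ((S^^(a+Suc b)) x) = (\<theta>^^b) (\<theta> (S ((S^^(a+b)) x)))"
    by (simp only: e1) simp
  also have "\<dots> = (\<theta>^^b) ((S^^(a+b)) x)" using Suc by (simp add: th_S Sn_space)
  finally show ?case using Suc by simp
qed simp

lemma Sth: "x \<in> space M \<Longrightarrow> (S^^(a+b)) ((\<theta>^^b) x) = (S^^a) x"
proof (induction b)
  case (Suc b)
  have e1: "(S^^(a+Suc b)) y = (S^^(a+b)) (S y)" for y
    by (simp only: add_Suc_right funpow_Suc_right) simp
  have "(S^^(a+Suc b)) ((\<theta>^^Suc b) x) = (S^^(a+b)) (S (\<theta> ((\<theta>^^b) x)))"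
    by (simp only: e1) simp
  also have "\<dots> = (S^^(a+b)) ((\<theta>^^b) x)" using Suc by (simp add: S_th thn_space)
  finally show ?case using Suc by simp
qed simp

definition C where "C \<omega> \<longleftrightarrow> (\<forall>n. column_stochastic (P n \<omega>)) \<and> P 0 \<omega> = mat 1 \<and>
        (\<forall>m n. P (m + n) \<omega> = P m ((\<theta> ^^ n) \<omega>) ** P n \<omega>)"

lemma AE_C: "AE \<omega> in M. C \<omega>" using coc by (simp add: transition_cocycle_def C_def)

definition Gd where "Gd \<omega> \<longleftrightarrow> \<omega> \<in> space M \<and> (\<forall>j. C ((\<theta>^^j) \<omega>)) \<and> (\<forall>j. C ((S^^j) \<omega>))"

lemma AE_Gd: "AE \<omega> in M. Gd \<omega>"
proof -
  have "AE \<omega> in M. \<forall>j. C ((\<theta>^^j) \<omega>)" by (subst AE_all_countable) (auto intro: AE_th AE_C)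
  moreover have "AE \<omega> in M. \<forall>j. C ((S^^j) \<omega>)" by (subst AE_all_countable) (auto intro: AE_S AE_C)
  ultimately show ?thesis by (auto simp: Gd_def)
qed

lemma Pmeas: "(\<lambda>\<omega>. P n \<omega> $ i $ j) \<in> borel_measurable M" using coc by (simp add: transition_cocycle_def)

lemma dm_meas: assumes f: "f \<in> M \<rightarrow>\<^sub>M M" shows "(\<lambda>\<omega>. dm (P n (f \<omega>))) \<in> borel_measurable M"
proof -
  have m: "(\<lambda>\<omega>. P n (f \<omega>) $ i $ j) \<in> borel_measurable M" for i j
    by (rule measurable_compose[OF f Pmeas])
  have "(\<lambda>\<omega>. Max ((\<lambda>ij. (\<lambda>(i,j) \<omega>. \<Sum>r\<in>UNIV. \<bar>P n (f \<omega>)$r$i - P n (f \<omega>)$r$j\<bar>) ij \<omega>) ` UNIV)) \<in> borel_measurable M"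
    by (rule borel_measurable_Max) (auto intro!: borel_measurable_sum borel_measurable_abs borel_measurable_diff m)
  then show ?thesis by (simp add: dm_def case_prod_beta')
qed

end


context mrn begin

lemma dm_meas0: "(\<lambda>\<omega>. dm (P n \<omega>)) \<in> borel_measurable M"
  using dm_meas[OF measurable_ident_sets[OF refl], of n] by simp

lemma dm_measS: "(\<lambda>\<omega>. dm (P n ((S^^n) \<omega>))) \<in> borel_measurable M"
  by (rule dm_meas[OF funpow_meas[OF S_meas]])

lemma d_mono: "AE \<omega> in M. \<forall>n. dm (P (Suc n) \<omega>) \<le> dm (P n \<omega>)"
  using AE_Gd
proof eventually_elim
  case (elim \<omega>)
  show ?case
  proof
    fix n
    have c0: "C \<omega>" using elim unfolding Gd_def by (metis funpow_0)
    have cn: "C ((\<theta>^^n) \<omega>)" using elim unfolding Gd_def by blast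
    have "P (Suc n) \<omega> = P 1 ((\<theta>^^n) \<omega>) ** P n \<omega>" using c0 unfolding C_def by (metis Suc_eq_plus1_left)
    moreover have "column_stochastic (P 1 ((\<theta>^^n) \<omega>))" using cn by (simp add: C_def)
    ultimately show "dm (P (Suc n) \<omega>) \<le> dm (P n \<omega>)" by (simp add: dm_left)
  qed
qed

lemma g_mono: "AE \<omega> in M. \<forall>n. dm (P (Suc n) ((S^^Suc n) \<omega>)) \<le> dm (P n ((S^^n) \<omega>))"
  using AE_Gd
proof eventually_elim
  case (elim \<omega>)
  show ?case
  proof
    fix n
    define y where "y = (S^^Suc n) \<omega>"
    have cy: "C y" using elim unfolding Gd_def y_def by blast
    have sp: "\<omega> \<in> space M" using elim by (simp add: Gd_def)
    have "(\<theta>^^1) y = (S^^n) \<omega>" using thS[OF sp, of 1 n] by (simp add: y_def)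
    then have "P (Suc n) y = P n ((S^^n) \<omega>) ** P 1 y" using cy unfolding C_def
      by (metis Suc_eq_plus1)
    moreover have "column_stochastic (P 1 y)" using cy by (simp add: C_def)
    ultimately show "dm (P (Suc n) ((S^^Suc n) \<omega>)) \<le> dm (P n ((S^^n) \<omega>))"
      by (simp add: dm_right y_def)
  qed
qed

lemma d_bd: "AE \<omega> in M. \<bar>dm (P n \<omega>)\<bar> \<le> 2"
  using AE_C by eventually_elim (simp add: C_def dm_cs dm_nonneg)

lemma g_bd: "AE \<omega> in M. \<bar>dm (P n ((S^^n) \<omega>))\<bar> \<le> 2"
  using AE_Gd by eventually_elim (auto simp: Gd_def C_def dm_cs dm_nonneg)

lemma int_eq: "integral\<^sup>L M (\<lambda>\<omega>. dm (P n ((S^^n) \<omega>))) = integral\<^sup>L M (\<lambda>\<omega>. dm (P n \<omega>))"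
  by (rule int_comp[OF funpow_meas[OF S_meas] funpow_dist[OF S_meas S_dist] dm_meas0])

lemma fwd_to_pb:
  assumes "AE \<omega> in M. (\<lambda>n. dm (P n \<omega>)) \<longlonglongrightarrow> 0"
  shows "AE \<omega> in M. (\<lambda>n. dm (P n ((S^^n) \<omega>))) \<longlonglongrightarrow> 0"
proof (rule ae_from_int[OF dm_measS g_bd dm_nonneg g_mono])
  have "(\<lambda>n. integral\<^sup>L M (\<lambda>\<omega>. dm (P n \<omega>))) \<longlonglongrightarrow> 0"
    by (rule int_to_0[OF dm_meas0 d_bd assms])
  then show "(\<lambda>n. integral\<^sup>L M (\<lambda>\<omega>. dm (P n ((S^^n) \<omega>)))) \<longlonglongrightarrow> 0" by (simp add: int_eq)
qed

lemma pb_to_fwd: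
  assumes "AE \<omega> in M. (\<lambda>n. dm (P n ((S^^n) \<omega>))) \<longlonglongrightarrow> 0"
  shows "AE \<omega> in M. (\<lambda>n. dm (P n \<omega>)) \<longlonglongrightarrow> 0"
proof (rule ae_from_int[OF dm_meas0 d_bd dm_nonneg d_mono])
  have "(\<lambda>n. integral\<^sup>L M (\<lambda>\<omega>. dm (P n ((S^^n) \<omega>)))) \<longlonglongrightarrow> 0"
    by (rule int_to_0[OF dm_measS g_bd assms])
  then show "(\<lambda>n. integral\<^sup>L M (\<lambda>\<omega>. dm (P n \<omega>))) \<longlonglongrightarrow> 0" by (simp add: int_eq)
qed

end


definition e0 :: "real^'k" where "e0 = axis undefined 1"

lemma e0_simplex: "e0 \<in> simplex1" by (simp add: e0_def axis_simplex)

lemma norm_le_l1: "norm (v::real^'k) \<le> l1norm v"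
  using norm_le_l1_cart[of v] by (simp add: l1norm_def)

context mrn begin

definition xs where "xs n \<omega> = P n ((S^^n) \<omega>) *v e0"
definition pp where "pp \<omega> = (if lim (\<lambda>n. xs n \<omega>) \<in> simplex1 then lim (\<lambda>n. xs n \<omega>) else e0)"

lemma pp_simplex: "pp \<omega> \<in> simplex1" by (simp add: pp_def e0_simplex)

lemma Gd_S: "Gd \<omega> \<Longrightarrow> C ((S^^n) \<omega>)" by (simp add: Gd_def)
lemma Gd_0: "Gd \<omega> \<Longrightarrow> C \<omega>" unfolding Gd_def by (metis funpow_0)
lemma Gd_sp: "Gd \<omega> \<Longrightarrow> \<omega> \<in> space M" by (simp add: Gd_def)

lemma xs_simplex: "Gd \<omega> \<Longrightarrow> xs n \<omega> \<in> simplex1"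
  unfolding xs_def by (rule cs_simplex[OF _ e0_simplex]) (use Gd_S in \<open>auto simp: C_def\<close>)

lemma xs_cauchy:
  assumes G: "Gd \<omega>" and nm: "n \<le> m"
  shows "l1norm (xs m \<omega> - xs n \<omega>) \<le> dm (P n ((S^^n) \<omega>))"
proof -
  obtain j where m: "m = n + j" using nm le_Suc_ex by blast
  define y where "y = (S^^(n+j)) \<omega>"
  have cy: "C y" using Gd_S[OF G] by (simp add: y_def)
  have th: "(\<theta>^^j) y = (S^^n) \<omega>" using thS[OF Gd_sp[OF G], of j n] by (simp add: y_def)
  have "P (n + j) y = P n ((S^^n) \<omega>) ** P j y" using cy th by (simp add: C_def)
  then have "xs m \<omega> = P n ((S^^n) \<omega>) *v (P j y *v e0)"
    by (simp add: xs_def m y_def matrix_vector_mul_assoc)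
  moreover have "P j y *v e0 \<in> simplex1" using cy by (intro cs_simplex e0_simplex) (simp add: C_def)
  ultimately show ?thesis by (simp add: xs_def bound e0_simplex)
qed

lemma xs_conv:
  assumes G: "Gd \<omega>" and g: "(\<lambda>n. dm (P n ((S^^n) \<omega>))) \<longlonglongrightarrow> 0"
  shows "(\<lambda>n. xs n \<omega>) \<longlonglongrightarrow> pp \<omega>"
proof -
  have "Cauchy (\<lambda>n. xs n \<omega>)"
  proof (rule CauchyI)
    fix r :: real assume r: "0 < r"
    have "\<forall>\<^sub>F n in sequentially. dm (P n ((S^^n) \<omega>)) < r / 2"
      by (rule order_tendstoD(2)[OF g]) (use r in simp)
    then obtain N where "\<forall>n\<ge>N. dm (P n ((S^^n) \<omega>)) < r / 2"
      unfolding eventually_sequentially by blast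
    then have N: "dm (P N ((S^^N) \<omega>)) < r / 2" by simp
    have "\<forall>m\<ge>N. \<forall>n\<ge>N. norm (xs m \<omega> - xs n \<omega>) < r"
    proof (intro allI impI)
      fix m n assume mN: "N \<le> m" and nN: "N \<le> n"
      have "norm (xs m \<omega> - xs n \<omega>) \<le> norm (xs m \<omega> - xs N \<omega>) + norm (xs n \<omega> - xs N \<omega>)"
        using norm_triangle_ineq4[of "xs m \<omega> - xs N \<omega>" "xs n \<omega> - xs N \<omega>"] by simp
      also have "\<dots> \<le> l1norm (xs m \<omega> - xs N \<omega>) + l1norm (xs n \<omega> - xs N \<omega>)"
        by (intro add_mono norm_le_l1)
      also have "\<dots> \<le> dm (P N ((S^^N) \<omega>)) + dm (P N ((S^^N) \<omega>))"
        by (intro add_mono xs_cauchy[OF G] mN nN)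
      finally show "norm (xs m \<omega> - xs n \<omega>) < r" using N by simp
    qed
    then show "\<exists>M. \<forall>m\<ge>M. \<forall>n\<ge>M. norm (xs m \<omega> - xs n \<omega>) < r" by blast
  qed
  then have L: "(\<lambda>n. xs n \<omega>) \<longlonglongrightarrow> lim (\<lambda>n. xs n \<omega>)"
    by (simp add: Cauchy_convergent_iff convergent_LIMSEQ_iff)
  have "lim (\<lambda>n. xs n \<omega>) \<in> simplex1"
    using closed_sequentially[OF closed_simplex, of "\<lambda>n. xs n \<omega>"] L xs_simplex[OF G] by blast
  then show ?thesis using L by (simp add: pp_def)
qed

lemma xs_meas: "(\<lambda>\<omega>. xs n \<omega>) \<in> borel_measurable M"
proof (rule meas_vec)
  fix r
  have m: "(\<lambda>\<omega>. P n ((S^^n) \<omega>) $ i $ j) \<in> borel_measurable M" for i j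
    by (rule measurable_compose[OF funpow_meas[OF S_meas] Pmeas])
  show "(\<lambda>\<omega>. xs n \<omega> $ r) \<in> borel_measurable M"
    unfolding xs_def matrix_vector_mult_def using m by simp
qed

lemma pp_meas: "pp \<in> borel_measurable M"
proof -
  have Lm: "(\<lambda>\<omega>. lim (\<lambda>n. xs n \<omega>)) \<in> borel_measurable M"
    by (rule borel_measurable_lim_metric[OF xs_meas])
  have "(\<lambda>\<omega>. lim (\<lambda>n. xs n \<omega>)) -` simplex1 \<inter> space M \<in> sets M"
    by (rule measurable_sets[OF Lm]) (simp add: borel_closed closed_simplex)
  then have s: "{\<omega> \<in> space M. lim (\<lambda>n. xs n \<omega>) \<in> simplex1} \<in> sets M"
    by (simp add: Int_def vimage_def conj_commute)
  show ?thesis unfolding pp_def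
    by (rule measurable_If[OF Lm _ s]) simp
qed

lemma pp_inv:
  assumes g: "AE \<omega> in M. (\<lambda>n. dm (P n ((S^^n) \<omega>))) \<longlonglongrightarrow> 0"
  shows "invariant_distribution M \<theta> P pp"
  unfolding invariant_distribution_def
proof (intro conjI allI ballI pp_meas pp_simplex)
  fix n
  show "AE \<omega> in M. P n \<omega> *v pp \<omega> = pp ((\<theta> ^^ n) \<omega>)"
    using AE_Gd g
  proof eventually_elim
    case (elim \<omega>)
    note G = elim(1)
    have sp: "\<omega> \<in> space M" using Gd_sp[OF G] .
    have eq: "xs (j + n) ((\<theta>^^n) \<omega>) = P n \<omega> *v xs j \<omega>" for j
    proof -
      define z where "z = (S^^j) \<omega>"
      have cz: "C z" using Gd_S[OF G] by (simp add: z_def)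
      have s1: "(S^^(j+n)) ((\<theta>^^n) \<omega>) = z" using Sth[OF sp, of j n] by (simp add: z_def)
      have s2: "(\<theta>^^j) z = \<omega>" using thS[OF sp, of j 0] by (simp add: z_def)
      have "P (n + j) z = P n \<omega> ** P j z" using cz s2 by (simp add: C_def)
      then show ?thesis by (simp add: xs_def s1 add.commute matrix_vector_mul_assoc z_def)
    qed
    have "(\<lambda>j. P n \<omega> *v xs j \<omega>) \<longlonglongrightarrow> P n \<omega> *v pp \<omega>"
      by (rule bounded_linear.tendsto[OF matrix_vector_mul_bounded_linear xs_conv[OF G elim(2)]])
    then have "(\<lambda>j. xs (j + n) ((\<theta>^^n) \<omega>)) \<longlonglongrightarrow> P n \<omega> *v pp \<omega>" by (simp add: eq)
    then have T: "(\<lambda>j. xs j ((\<theta>^^n) \<omega>)) \<longlonglongrightarrow> P n \<omega> *v pp \<omega>" by (rule LIMSEQ_offset)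
    have "P n \<omega> *v pp \<omega> \<in> simplex1"
      using Gd_0[OF G] by (intro cs_simplex pp_simplex) (simp add: C_def)
    then show ?case using limI[OF T] by (simp add: pp_def)
  qed
qed

lemma inv_pull:
  assumes g: "AE \<omega> in M. (\<lambda>n. dm (P n ((S^^n) \<omega>))) \<longlonglongrightarrow> 0"
    and inv: "invariant_distribution M \<theta> P p"
  shows "pullback_attracting M \<theta> P p"
  unfolding pullback_attracting_def
proof
  fix q :: "real^'k" assume q: "q \<in> simplex1"
  have ps: "\<And>\<omega>. \<omega> \<in> space M \<Longrightarrow> p \<omega> \<in> simplex1" using inv by (simp add: invariant_distribution_def)
  have A: "AE \<omega> in M. \<forall>n. P n ((S^^n) \<omega>) *v p ((S^^n) \<omega>) = p ((\<theta>^^n) ((S^^n) \<omega>))"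
    unfolding AE_all_countable
  proof
    fix n
    have "AE \<omega> in M. P n \<omega> *v p \<omega> = p ((\<theta>^^n) \<omega>)" using inv by (simp add: invariant_distribution_def)
    then show "AE \<omega> in M. P n ((S^^n) \<omega>) *v p ((S^^n) \<omega>) = p ((\<theta>^^n) ((S^^n) \<omega>))" by (rule AE_S)
  qed
  show "AE \<omega> in M. (\<lambda>n. l1norm (P n ((S ^^ n) \<omega>) *v q - p \<omega>)) \<longlonglongrightarrow> 0"
    using A g AE_space
  proof eventually_elim
    case (elim \<omega>)
    have le: "l1norm (P n ((S^^n) \<omega>) *v q - p \<omega>) \<le> dm (P n ((S^^n) \<omega>))" for n
    proof -
      have "(\<theta>^^n) ((S^^n) \<omega>) = \<omega>" using thS[OF elim(3), of n 0] by simp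
      then have "p \<omega> = P n ((S^^n) \<omega>) *v p ((S^^n) \<omega>)" using elim(1) by simp
      then show ?thesis using bound[OF q ps[OF Sn_space[OF elim(3)]]] by simp
    qed
    show ?case
      by (rule tendsto_sandwich[OF _ _ tendsto_const elim(2)]) (auto simp: le l1_nonneg)
  qed
qed

end


context mrn begin

lemma inv_fwd:
  assumes d: "AE \<omega> in M. (\<lambda>n. dm (P n \<omega>)) \<longlonglongrightarrow> 0"
    and inv: "invariant_distribution M \<theta> P p"
  shows "forward_attracting M \<theta> P p"
  unfolding forward_attracting_def
proof
  fix q :: "real^'k" assume q: "q \<in> simplex1"
  have ps: "\<And>\<omega>. \<omega> \<in> space M \<Longrightarrow> p \<omega> \<in> simplex1" using inv by (simp add: invariant_distribution_def)
  have A: "AE \<omega> in M. \<forall>n. P n \<omega> *v p \<omega> = p ((\<theta>^^n) \<omega>)"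
    unfolding AE_all_countable using inv by (simp add: invariant_distribution_def)
  show "AE \<omega> in M. (\<lambda>n. l1norm (P n \<omega> *v q - p ((\<theta> ^^ n) \<omega>))) \<longlonglongrightarrow> 0"
    using A d AE_space
  proof eventually_elim
    case (elim \<omega>)
    have le: "l1norm (P n \<omega> *v q - p ((\<theta> ^^ n) \<omega>)) \<le> dm (P n \<omega>)" for n
      using bound[OF q ps[OF elim(3)], of "P n \<omega>"] elim(1) by simp
    show ?case
      by (rule tendsto_sandwich[OF _ _ tendsto_const elim(2)]) (auto simp: le l1_nonneg)
  qed
qed

lemma pull_g:
  assumes "pullback_attracting M \<theta> P p"
  shows "AE \<omega> in M. (\<lambda>n. dm (P n ((S^^n) \<omega>))) \<longlonglongrightarrow> 0"
proof -
  have "AE \<omega> in M. \<forall>i. (\<lambda>n. l1norm (P n ((S^^n) \<omega>) *v axis i 1 - p \<omega>)) \<longlonglongrightarrow> 0"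
    unfolding AE_all_countable using assms axis_simplex unfolding pullback_attracting_def by blast
  then show ?thesis
  proof eventually_elim
    case (elim \<omega>)
    show ?case by (rule dm_tendsto_pt[where c="\<lambda>n. p \<omega>"]) (use elim in blast)
  qed
qed

lemma fwd_d:
  assumes "forward_attracting M \<theta> P p"
  shows "AE \<omega> in M. (\<lambda>n. dm (P n \<omega>)) \<longlonglongrightarrow> 0"
proof -
  have "AE \<omega> in M. \<forall>i. (\<lambda>n. l1norm (P n \<omega> *v axis i 1 - p ((\<theta>^^n) \<omega>))) \<longlonglongrightarrow> 0"
    unfolding AE_all_countable using assms axis_simplex unfolding forward_attracting_def by blast
  then show ?thesis
  proof eventually_elim
    case (elim \<omega>)
    show ?case by (rule dm_tendsto_pt[where c="\<lambda>n. p ((\<theta>^^n) \<omega>)"]) (use elim in blast)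
  qed
qed

lemma pull_unique:
  assumes "pullback_attracting M \<theta> P p" "pullback_attracting M \<theta> P p'"
  shows "AE \<omega> in M. p \<omega> = p' \<omega>"
proof -
  have "AE \<omega> in M. (\<lambda>n. l1norm (P n ((S^^n) \<omega>) *v e0 - p \<omega>)) \<longlonglongrightarrow> 0"
    using assms(1) e0_simplex unfolding pullback_attracting_def by blast
  moreover have "AE \<omega> in M. (\<lambda>n. l1norm (P n ((S^^n) \<omega>) *v e0 - p' \<omega>)) \<longlonglongrightarrow> 0"
    using assms(2) e0_simplex unfolding pullback_attracting_def by blast
  ultimately show ?thesis
  proof eventually_elim
    case (elim \<omega>)
    then show ?case using LIMSEQ_unique by (auto simp: l1_tendsto)
  qed
qed

lemma main:
  shows "(converges_in_distribution M P \<longleftrightarrow>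
           (\<exists>p. invariant_distribution M \<theta> P p \<and> pullback_attracting M \<theta> P p))
       \<and> ((\<exists>p. invariant_distribution M \<theta> P p \<and> pullback_attracting M \<theta> P p) \<longleftrightarrow>
           (\<exists>p. invariant_distribution M \<theta> P p \<and> forward_attracting M \<theta> P p))
       \<and> (\<forall>p p'. invariant_distribution M \<theta> P p \<and>
                   (pullback_attracting M \<theta> P p \<or> forward_attracting M \<theta> P p) \<and>
                 invariant_distribution M \<theta> P p' \<and>
                   (pullback_attracting M \<theta> P p' \<or> forward_attracting M \<theta> P p')
                 \<longrightarrow> (AE \<omega> in M. p \<omega> = p' \<omega>))"
proof -
  have c2p: "\<exists>p. invariant_distribution M \<theta> P p \<and> pullback_attracting M \<theta> P p"
    if "converges_in_distribution M P"
  proof -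
    have g: "AE \<omega> in M. (\<lambda>n. dm (P n ((S^^n) \<omega>))) \<longlonglongrightarrow> 0"
      using that by (intro fwd_to_pb) (simp add: cid_iff)
    show ?thesis using pp_inv[OF g] inv_pull[OF g pp_inv[OF g]] by blast
  qed
  have p2d: "AE \<omega> in M. (\<lambda>n. dm (P n \<omega>)) \<longlonglongrightarrow> 0" if "pullback_attracting M \<theta> P p" for p
    by (rule pb_to_fwd[OF pull_g[OF that]])
  have f2p: "pullback_attracting M \<theta> P p"
    if "invariant_distribution M \<theta> P p" "forward_attracting M \<theta> P p" for p
    by (rule inv_pull[OF fwd_to_pb[OF fwd_d[OF that(2)]] that(1)])
  have p2f: "forward_attracting M \<theta> P p"
    if "invariant_distribution M \<theta> P p" "pullback_attracting M \<theta> P p" for p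
    by (rule inv_fwd[OF p2d[OF that(2)] that(1)])
  show ?thesis
  proof (intro conjI iffI allI impI)
    assume "converges_in_distribution M P" then show "\<exists>p. invariant_distribution M \<theta> P p \<and> pullback_attracting M \<theta> P p"
      by (rule c2p)
  next
    assume "\<exists>p. invariant_distribution M \<theta> P p \<and> pullback_attracting M \<theta> P p"
    then show "converges_in_distribution M P" using p2d by (auto simp: cid_iff)
  next
    assume "\<exists>p. invariant_distribution M \<theta> P p \<and> pullback_attracting M \<theta> P p"
    then show "\<exists>p. invariant_distribution M \<theta> P p \<and> forward_attracting M \<theta> P p" using p2f by blast
  next
    assume "\<exists>p. invariant_distribution M \<theta> P p \<and> forward_attracting M \<theta> P p"
    then show "\<exists>p. invariant_distribution M \<theta> P p \<and> pullback_attracting M \<theta> P p" using f2p by blast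
  next
    fix p p'
    assume h: "invariant_distribution M \<theta> P p \<and> (pullback_attracting M \<theta> P p \<or> forward_attracting M \<theta> P p) \<and>
                 invariant_distribution M \<theta> P p' \<and> (pullback_attracting M \<theta> P p' \<or> forward_attracting M \<theta> P p')"
    then have "pullback_attracting M \<theta> P p" "pullback_attracting M \<theta> P p'" using f2p by blast+
    then show "AE \<omega> in M. p \<omega> = p' \<omega>" by (rule pull_unique)
  qed
qed

end

theorem lemma2p6:
  fixes M :: "'a measure" and \<theta> :: "'a \<Rightarrow> 'a"
    and P :: "nat \<Rightarrow> 'a \<Rightarrow> real ^ 'k ^ 'k"
  assumes "CARD('k) \<ge> 2"
    and "invertible_mds M \<theta>"
    and "transition_cocycle M \<theta> P"
  shows "(converges_in_distribution M P \<longleftrightarrow>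
           (\<exists>p. invariant_distribution M \<theta> P p \<and> pullback_attracting M \<theta> P p))
       \<and> ((\<exists>p. invariant_distribution M \<theta> P p \<and> pullback_attracting M \<theta> P p) \<longleftrightarrow>
           (\<exists>p. invariant_distribution M \<theta> P p \<and> forward_attracting M \<theta> P p))
       \<and> (\<forall>p p'. invariant_distribution M \<theta> P p \<and>
                   (pullback_attracting M \<theta> P p \<or> forward_attracting M \<theta> P p) \<and>
                 invariant_distribution M \<theta> P p' \<and>
                   (pullback_attracting M \<theta> P p' \<or> forward_attracting M \<theta> P p')
                 \<longrightarrow> (AE \<omega> in M. p \<omega> = p' \<omega>))"
proof -
  interpret mrn M \<theta> P using assms(2,3) by unfold_locales
  show ?thesis by (rule main)
qed



end
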